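(* Fix a run $r$ of a protocol $P$, a node $\theta=\langle i,t\rangle$, and a delay $\Delta>0$ (an integer). For each process $j$ let $t_j$ be the minimal time $l\ge 0$ such that $\langle j,l\rangle\not\rightsquigarrow_r\theta$. Then there exists a run $r'$ with $r'\approx r$ such that for every process $j$: $r_j(m)=r'_j(m)$ for all $m\le t_j$, and $r_j(m)=r'_j(m+\Delta)$ for all $m\ge t_j+1$.
   Context: Model: $n$ processes connected by directed FIFO channels; an environment (adversary) schedules everything. Time is identified with the natural numbers; a run $r=r(0),r(1),\dots$ is an infinite sequence of global states, $r_i(m)$ denotes process $i$'s local state at time $m$, and round $m+1$ transforms $r(m)$ into $r(m+1)$. In each round the environment chooses independently for each process $i$ one of: $\mathtt{move}_i$ ($i$ performs an action allowed by its protocol at its current local state — a local action or sending a message), $\mathtt{skip}_i$ (nothing happens to $i$), $\mathtt{invoke}_i(x)$ ($i$ receives external input $x$), or $\mathtt{deliver}_i$ of a message from some $j$ (delivered if it is the oldest message in transit on the channel from $j$ to $i$). The local state of a process consists of its initial value together with the complete ordered history of all actions it performed, messages it sent and received, and inputs it received. A run of protocol $P=(P_1,\dots,P_n)$ starts in an initial global state and every action performed by every process $i$ is among those allowed by $P_i$ at $i$'s current local state. A node is a process-time pair $\langle p,t\rangle$. Message chains: $\langle p,t\rangle\rightsquigarrow_r\langle q,t'\rangle$ holds if (1a) $p=q$ and $t<t'$, or (1b) $p$ sends a message to $q$ in round $t+1$ of $r$ that is delivered no later than round $t'$, or (2) there is a node $\theta''$ with $\langle p,t\rangle\rightsquigarrow_r\theta''$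 and $\theta''\rightsquigarrow_r\langle q,t'\rangle$. Two runs are locally equivalent, $r\approx r'$, if for every process $j$, a local state of $j$ appears in $r$ iff it appears in $r'$. *)

theory Defs
  imports Main
begin

datatype ('a, 'm, 'p) action = LocalAct 'a | SendAct 'p 'm

datatype ('a, 'm, 'x, 'p) event =
    EAct 'a | ESend 'p 'm | ERecv 'p 'm | EInput 'x

datatype ('v, 'a, 'm, 'x, 'p) lstate =
  LS (init: 'v) (hist: "('a, 'm, 'x, 'p) event list")

type_synonym ('v, 'a, 'm, 'x, 'p) gstate = "'p \<Rightarrow> ('v, 'a, 'm, 'x, 'p) lstate"
type_synonym ('v, 'a, 'm, 'x, 'p) run = "nat \<Rightarrow> ('v, 'a, 'm, 'x, 'p) gstate"

type_synonym ('v, 'a, 'm, 'x, 'p) protocol =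
  "'p \<Rightarrow> ('v, 'a, 'm, 'x, 'p) lstate \<Rightarrow> ('a, 'm, 'p) action set"

datatype ('x, 'p) env_choice = Move | Skip | Invoke 'x | Deliver 'p

fun add_event :: "('v, 'a, 'm, 'x, 'p) lstate \<Rightarrow> ('a, 'm, 'x, 'p) event \<Rightarrow> ('v, 'a, 'm, 'x, 'p) lstate" where
  "add_event (LS v h) e = LS v (h @ [e])"

fun event_of_action :: "('a, 'm, 'p) action \<Rightarrow> ('a, 'm, 'x, 'p) event" where
  "event_of_action (LocalAct a) = EAct a"
| "event_of_action (SendAct q m) = ESend q m"

definition sent_msgs :: "('v, 'a, 'm, 'x, 'p) gstate \<Rightarrow> 'p \<Rightarrow> 'p \<Rightarrow> 'm list" where
  "sent_msgs g j i = concat (map (\<lambda>e. case e of ESend q m \<Rightarrow> if q = i then [m] else [] | _ \<Rightarrow> []) (hist (g j)))"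

definition recvd_msgs :: "('v, 'a, 'm, 'x, 'p) gstate \<Rightarrow> 'p \<Rightarrow> 'p \<Rightarrow> 'm list" where
  "recvd_msgs g i j = concat (map (\<lambda>e. case e of ERecv q m \<Rightarrow> if q = j then [m] else [] | _ \<Rightarrow> []) (hist (g i)))"

text \<open>Messages in transit on the FIFO channel from j to i (oldest first).\<close>
definition in_transit :: "('v, 'a, 'm, 'x, 'p) gstate \<Rightarrow> 'p \<Rightarrow> 'p \<Rightarrow> 'm list" where
  "in_transit g j i = drop (length (recvd_msgs g i j)) (sent_msgs g j i)"

fun proc_step :: "('v, 'a, 'm, 'x, 'p) protocol \<Rightarrow> ('v, 'a, 'm, 'x, 'p) gstate \<Rightarrow> 'p
    \<Rightarrow> ('x, 'p) env_choice \<Rightarrow> ('v, 'a, 'm, 'x, 'p) lstate \<Rightarrow> bool" where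
  "proc_step P g i Skip s' = (s' = g i)"
| "proc_step P g i Move s' = (\<exists>act \<in> P i (g i). s' = add_event (g i) (event_of_action act))"
| "proc_step P g i (Invoke x) s' = (s' = add_event (g i) (EInput x))"
| "proc_step P g i (Deliver j) s' =
     (if in_transit g j i = [] then s' = g i
      else s' = add_event (g i) (ERecv j (hd (in_transit g j i))))"

definition is_run :: "('v, 'a, 'm, 'x, 'p) protocol \<Rightarrow> ('v, 'a, 'm, 'x, 'p) run \<Rightarrow> bool" where
  "is_run P r \<longleftrightarrow> (\<forall>i. hist (r 0 i) = []) \<and>
     (\<forall>m. \<exists>c :: 'p \<Rightarrow> ('x, 'p) env_choice. \<forall>i. proc_step P (r m) i (c i) (r (Suc m) i))"

text \<open>Process p sends (its k-th message to q, counting from 0) in round t+1.\<close>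
definition sends_in_round :: "('v, 'a, 'm, 'x, 'p) run \<Rightarrow> 'p \<Rightarrow> 'p \<Rightarrow> nat \<Rightarrow> nat \<Rightarrow> bool" where
  "sends_in_round r p q t k \<longleftrightarrow>
     length (sent_msgs (r t) p q) = k \<and> length (sent_msgs (r (Suc t)) p q) > k"

text \<open>Message chains (Lamport's happened-before on nodes).\<close>
inductive msg_chain :: "('v, 'a, 'm, 'x, 'p) run \<Rightarrow> 'p \<times> nat \<Rightarrow> 'p \<times> nat \<Rightarrow> bool"
  for r where
  local: "t < t' \<Longrightarrow> msg_chain r (p, t) (p, t')"
| msg: "sends_in_round r p q t k \<Longrightarrow> length (recvd_msgs (r t') q p) > k
          \<Longrightarrow> msg_chain r (p, t) (q, t')"
| trans: "msg_chain r a b \<Longrightarrow> msg_chain r b c \<Longrightarrow> msg_chain r a c"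

definition loc_equiv :: "('v, 'a, 'm, 'x, 'p) run \<Rightarrow> ('v, 'a, 'm, 'x, 'p) run \<Rightarrow> bool" where
  "loc_equiv r r' \<longleftrightarrow> (\<forall>j. (\<forall>s. (\<exists>m. r m j = s) \<longleftrightarrow> (\<exists>m. r' m j = s)))"

definition t_min :: "('v, 'a, 'm, 'x, 'p) run \<Rightarrow> 'p \<times> nat \<Rightarrow> 'p \<Rightarrow> nat" where
  "t_min r \<theta> j = (LEAST l. \<not> msg_chain r (j, l) \<theta>)"

end

theory Submission
  imports Defs
begin

definition sl :: "('v, 'a, 'm, 'x, 'p) lstate \<Rightarrow> 'p \<Rightarrow> 'm list" where
  "sl s i = concat (map (\<lambda>e. case e of ESend q m \<Rightarrow> if q = i then [m] else [] | _ \<Rightarrow> []) (hist s))"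

definition rl :: "('v, 'a, 'm, 'x, 'p) lstate \<Rightarrow> 'p \<Rightarrow> 'm list" where
  "rl s j = concat (map (\<lambda>e. case e of ERecv q m \<Rightarrow> if q = j then [m] else [] | _ \<Rightarrow> []) (hist s))"

lemma sent_sl[simp]: "sent_msgs g j i = sl (g j) i"
  by (simp add: sent_msgs_def sl_def)

lemma recvd_rl[simp]: "recvd_msgs g i j = rl (g i) j"
  by (simp add: recvd_msgs_def rl_def)

lemma hist_add[simp]: "hist (add_event s e) = hist s @ [e]"
  by (cases s) simp

lemma sl_add_recv[simp]: "sl (add_event s (ERecv k x)) i = sl s i"
  by (simp add: sl_def)

lemma rl_add_recv[simp]: "rl (add_event s (ERecv k x)) k = rl s k @ [x]"
  by (simp add: rl_def)

definition ok_step :: "('v, 'a, 'm, 'x, 'p) protocol \<Rightarrow> ('v, 'a, 'm, 'x, 'p) gstate \<Rightarrow> 'p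
    \<Rightarrow> ('v, 'a, 'm, 'x, 'p) lstate \<Rightarrow> bool" where
  "ok_step P g j s' \<longleftrightarrow> s' = g j \<or> (\<exists>act \<in> P j (g j). s' = add_event (g j) (event_of_action act))
     \<or> (\<exists>x. s' = add_event (g j) (EInput x))
     \<or> (\<exists>k. in_transit g k j \<noteq> [] \<and> s' = add_event (g j) (ERecv k (hd (in_transit g k j))))"

lemma ok_hist: "ok_step P g j s' \<Longrightarrow> hist s' = hist (g j) \<or> (\<exists>e. hist s' = hist (g j) @ [e])"
  unfolding ok_step_def by auto

lemma run_ok: assumes "is_run P r" shows "ok_step P (r m) j (r (Suc m) j)"
proof -
  obtain c where "\<forall>i. proc_step P (r m) i (c i) (r (Suc m) i)" using assms unfolding is_run_def by blast
  hence "proc_step P (r m) j (c j) (r (Suc m) j)" by blast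
  thus ?thesis unfolding ok_step_def by (cases "c j") (auto split: if_splits)
qed

lemma ok_proc: assumes "ok_step P g j s'" shows "\<exists>c. proc_step P g j c s'"
  using assms unfolding ok_step_def
proof (elim disjE exE conjE bexE)
  assume "s' = g j" thus ?thesis by (intro exI[of _ Skip]) simp
next
  fix act assume "act \<in> P j (g j)" "s' = add_event (g j) (event_of_action act)"
  thus ?thesis by (intro exI[of _ Move]) auto
next
  fix x assume "s' = add_event (g j) (EInput x)"
  thus ?thesis by (intro exI[of _ "Invoke x"]) auto
next
  fix k assume "in_transit g k j \<noteq> []" "s' = add_event (g j) (ERecv k (hd (in_transit g k j)))"
  thus ?thesis by (intro exI[of _ "Deliver k"]) auto
qed

lemma ok_run:
  assumes "\<forall>i. hist (r 0 i) = []" "\<forall>m j. ok_step P (r m) j (r (Suc m) j)"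
  shows "is_run P r"
  unfolding is_run_def
proof (intro conjI allI)
  show "\<And>i. hist (r 0 i) = []" using assms(1) by blast
  fix m
  have "\<forall>i. \<exists>c. proc_step P (r m) i c (r (Suc m) i)" using assms(2) by (auto intro!: ok_proc)
  thus "\<exists>c. \<forall>i. proc_step P (r m) i (c i) (r (Suc m) i)" by (rule choice)
qed

lemma hist_mono: assumes "is_run P r" "m \<le> m'" shows "\<exists>ys. hist (r m' j) = hist (r m j) @ ys"
  using assms(2)
proof (induction m' rule: dec_induct)
  case base thus ?case by simp
next
  case (step n)
  then obtain ys where "hist (r n j) = hist (r m j) @ ys" by blast
  moreover have "hist (r (Suc n) j) = hist (r n j) \<or> (\<exists>e. hist (r (Suc n) j) = hist (r n j) @ [e])"
    by (rule ok_hist[OF run_ok[OF assms(1)]])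
  ultimately show ?case by (metis append.assoc)
qed

lemma sl_mono: assumes "is_run P r" "m \<le> m'" shows "\<exists>zs. sl (r m' j) i = sl (r m j) i @ zs"
  using hist_mono[OF assms, of j] unfolding sl_def by auto

lemma sl_len_mono: assumes "is_run P r" "m \<le> m'" shows "length (sl (r m j) i) \<le> length (sl (r m' j) i)"
  using sl_mono[OF assms, of j i] by auto

lemma sl_step: assumes "is_run P r" shows "length (sl (r (Suc m) j) i) \<le> Suc (length (sl (r m j) i))"
proof -
  have "hist (r (Suc m) j) = hist (r m j) \<or> (\<exists>e. hist (r (Suc m) j) = hist (r m j) @ [e])"
    by (rule ok_hist[OF run_ok[OF assms]])
  thus ?thesis
  proof
    assume "hist (r (Suc m) j) = hist (r m j)" thus ?thesis by (simp add: sl_def)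
  next
    assume "\<exists>e. hist (r (Suc m) j) = hist (r m j) @ [e]"
    then obtain e where "hist (r (Suc m) j) = hist (r m j) @ [e]" by blast
    thus ?thesis by (cases e) (auto simp: sl_def)
  qed
qed

lemma rl_step: assumes "ok_step P g q s'"
  shows "rl s' p = rl (g q) p \<or> (in_transit g p q \<noteq> [] \<and> rl s' p = rl (g q) p @ [hd (in_transit g p q)])"
  using assms unfolding ok_step_def
proof (elim disjE exE conjE bexE)
  fix act assume "s' = add_event (g q) (event_of_action act)"
  thus ?thesis by (cases act) (auto simp: rl_def)
qed (auto simp: rl_def)

lemma inv: assumes "is_run P r" shows "\<exists>zs. sl (r m p) q = rl (r m q) p @ zs"
proof (induction m)
  case 0
  have "hist (r 0 p) = []" "hist (r 0 q) = []" using assms unfolding is_run_def by auto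
  thus ?case by (simp add: sl_def rl_def)
next
  case (Suc m)
  then obtain zs where zs: "sl (r m p) q = rl (r m q) p @ zs" by blast
  obtain ws where ws: "sl (r (Suc m) p) q = sl (r m p) q @ ws" using sl_mono[OF assms, of m "Suc m"] by auto
  have it: "in_transit (r m) p q = zs" using zs by (simp add: in_transit_def)
  from rl_step[OF run_ok[OF assms], of m q p]
  show ?case
  proof
    assume "rl (r (Suc m) q) p = rl (r m q) p" thus ?thesis using zs ws by auto
  next
    assume h: "in_transit (r m) p q \<noteq> [] \<and> rl (r (Suc m) q) p = rl (r m q) p @ [hd (in_transit (r m) p q)]"
    then obtain z zs' where "zs = z # zs'" using it by (cases zs) auto
    thus ?thesis using h it zs ws by auto
  qed
qed

lemma rl_len: assumes "is_run P r" shows "length (rl (r (Suc m) q) p) \<le> length (sl (r m p) q)"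
proof -
  obtain zs where zs: "sl (r m p) q = rl (r m q) p @ zs" using inv[OF assms] by blast
  have it: "in_transit (r m) p q = zs" using zs by (simp add: in_transit_def)
  from rl_step[OF run_ok[OF assms], of m q p] show ?thesis
    using zs it by (cases zs) auto
qed


lemma rl0: assumes "is_run P r" shows "rl (r 0 q) p = []"
  using assms unfolding is_run_def by (simp add: rl_def)

lemma sl0: assumes "is_run P r" shows "sl (r 0 q) p = []"
  using assms unfolding is_run_def by (simp add: sl_def)

lemma msg_time: assumes "is_run P r" "sends_in_round r p q t k" "length (recvd_msgs (r t') q p) > k"
  shows "t < t'"
proof (cases t')
  case 0 thus ?thesis using assms(3) rl0[OF assms(1)] by simp
next
  case (Suc m')
  have "k < length (sl (r m' p) q)" using rl_len[OF assms(1), of m' q p] assms(3) Suc by simp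
  moreover have "length (sl (r t p) q) = k" using assms(2) by (simp add: sends_in_round_def)
  ultimately have "\<not> m' \<le> t" using sl_len_mono[OF assms(1), of m' t p q] by linarith
  thus ?thesis using Suc by simp
qed

lemma chain_time: assumes "is_run P r" "msg_chain r a b" shows "snd a < snd b"
  using assms(2)
proof (induction rule: msg_chain.induct)
  case (msg p q t k t') thus ?case using msg_time[OF assms(1)] by simp
qed auto

lemma chain_first: assumes "msg_chain r a b"
  shows "(fst a = fst b \<and> snd a < snd b) \<or> (\<exists>l q t' k. snd a \<le> l \<and> sends_in_round r (fst a) q l k
     \<and> k < length (recvd_msgs (r t') q (fst a)) \<and> ((q,t') = b \<or> msg_chain r (q,t') b))"
  using assms
proof (induction rule: msg_chain.induct)
  case (local t t' p) thus ?case by simp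
next
  case (msg p q t k t') thus ?case
    by (intro disjI2 exI[of _ t] exI[of _ q] exI[of _ t'] exI[of _ k]) simp
next
  case (trans a b c)
  from trans.IH(1) show ?case
  proof
    assume ab: "fst a = fst b \<and> snd a < snd b"
    from trans.IH(2) show ?thesis
    proof
      assume "fst b = fst c \<and> snd b < snd c" thus ?thesis using ab by auto
    next
      assume "\<exists>l q t' k. snd b \<le> l \<and> sends_in_round r (fst b) q l k
     \<and> k < length (recvd_msgs (r t') q (fst b)) \<and> ((q,t') = c \<or> msg_chain r (q,t') c)"
      then obtain l q t' k where "snd b \<le> l" "sends_in_round r (fst b) q l k"
        "k < length (recvd_msgs (r t') q (fst b))" "(q,t') = c \<or> msg_chain r (q,t') c" by blast
      thus ?thesis using ab by (metis less_imp_le order.trans)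
    qed
  next
    assume "\<exists>l q t' k. snd a \<le> l \<and> sends_in_round r (fst a) q l k
     \<and> k < length (recvd_msgs (r t') q (fst a)) \<and> ((q,t') = b \<or> msg_chain r (q,t') b)"
    then obtain l q t' k where "snd a \<le> l" "sends_in_round r (fst a) q l k"
        "k < length (recvd_msgs (r t') q (fst a))" "(q,t') = b \<or> msg_chain r (q,t') b" by blast
    moreover have "msg_chain r (q,t') c" using calculation(4) trans.hyps
      by (metis msg_chain.trans)
    ultimately show ?thesis by blast
  qed
qed

lemma tmin_not: assumes "is_run P r" shows "\<not> msg_chain r (j, t_min r \<theta> j) \<theta>"
proof -
  have "\<not> msg_chain r (j, snd \<theta>) \<theta>" using chain_time[OF assms] by fastforce
  thus ?thesis unfolding t_min_def by (rule LeastI)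
qed

lemma tmin_lt: "l < t_min r \<theta> j \<Longrightarrow> msg_chain r (j, l) \<theta>"
  unfolding t_min_def using not_less_Least by blast

lemma tmin_ge: assumes "is_run P r" "msg_chain r (j, l) \<theta>" shows "l < t_min r \<theta> j"
proof (rule ccontr)
  assume "\<not> l < t_min r \<theta> j"
  hence "l = t_min r \<theta> j \<or> t_min r \<theta> j < l" by auto
  thus False
  proof
    assume "l = t_min r \<theta> j" thus False using tmin_not[OF assms(1)] assms(2) by simp
  next
    assume "t_min r \<theta> j < l"
    hence "msg_chain r (j, t_min r \<theta> j) \<theta>" using assms(2) msg_chain.local msg_chain.trans by metis
    thus False using tmin_not[OF assms(1)] by simp
  qed
qed

lemma exists_send: assumes "is_run P r" "L < length (sl (r n k) j)"
  shows "\<exists>s. Suc s \<le> n \<and> length (sl (r s k) j) = L \<and> L < length (sl (r (Suc s) k) j)"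
  using assms(2)
proof (induction n)
  case 0 thus ?case using sl0[OF assms(1)] by simp
next
  case (Suc n)
  show ?case
  proof (cases "L < length (sl (r n k) j)")
    case True thus ?thesis using Suc.IH by (meson le_SucI)
  next
    case False
    thus ?thesis using Suc.prems sl_step[OF assms(1), of n k j] by (intro exI[of _ n]) auto
  qed
qed


lemma hd_same: assumes run: "is_run P r" and "L < length (sl (r F k) j)" "L < length (sl (r n k) j)"
  shows "hd (drop L (sl (r F k) j)) = hd (drop L (sl (r n k) j))"
proof -
  obtain z1 where z1: "sl (r (max F n) k) j = sl (r F k) j @ z1" using sl_mono[OF run, of F "max F n"] by auto
  obtain z2 where z2: "sl (r (max F n) k) j = sl (r n k) j @ z2" using sl_mono[OF run, of n "max F n"] by auto
  have "hd (drop L (sl (r F k) j)) = sl (r F k) j ! L" using assms(2) by (simp add: hd_drop_conv_nth)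
  also have "\<dots> = sl (r (max F n) k) j ! L" using z1 assms(2) by (simp add: nth_append)
  also have "\<dots> = sl (r n k) j ! L" using z2 assms(3) by (simp add: nth_append)
  also have "\<dots> = hd (drop L (sl (r n k) j))" using assms(3) by (simp add: hd_drop_conv_nth)
  finally show ?thesis .
qed

lemma key:
  assumes run: "is_run P r"
  and it: "in_transit (r n) k j \<noteq> []"
  and st: "r (Suc n) j = add_event (r n j) (ERecv k (hd (in_transit (r n) k j)))"
  and cs: "(m < t_min r \<theta> j \<and> n = m) \<or> (t_min r \<theta> j + \<Delta> \<le> m \<and> n = m - \<Delta>)"
  and F1: "m - \<Delta> \<le> F" and F2: "min m (t_min r \<theta> k) \<le> F"
  shows "length (rl (r n j) k) < length (sl (r F k) j)"
proof -
  define L where "L = length (rl (r n j) k)"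
  have Ln: "L < length (sl (r n k) j)" using it by (simp add: in_transit_def L_def)
  obtain s where s: "Suc s \<le> n" "length (sl (r s k) j) = L" "L < length (sl (r (Suc s) k) j)"
    using exists_send[OF run Ln] by blast
  have sir: "sends_in_round r k j s L" using s by (simp add: sends_in_round_def)
  have "L < length (recvd_msgs (r (Suc n)) j k)" using st by (simp add: L_def)
  hence ch1: "msg_chain r (k, s) (j, Suc n)" using sir by (rule msg_chain.msg[rotated])
  have "Suc s \<le> F"
    using cs
  proof
    assume "t_min r \<theta> j + \<Delta> \<le> m \<and> n = m - \<Delta>" thus ?thesis using F1 s(1) by simp
  next
    assume A: "m < t_min r \<theta> j \<and> n = m"
    have "msg_chain r (k, s) \<theta>"
    proof (cases "Suc n < t_min r \<theta> j")
      case True thus ?thesis using tmin_lt[of "Suc n" r \<theta> j] ch1 msg_chain.trans by blast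
    next
      case False
      hence tj: "t_min r \<theta> j = Suc n" using A by simp
      have cn: "msg_chain r (j, n) \<theta>" using tmin_lt[of n r \<theta> j] A by simp
      have nc: "\<not> msg_chain r (j, Suc n) \<theta>" using tmin_not[OF run, of j \<theta>] tj by simp
      from chain_first[OF cn] show ?thesis
      proof
        assume "fst (j, n) = fst \<theta> \<and> snd (j, n) < snd \<theta>"
        then obtain t0 where th: "\<theta> = (j, t0)" "n < t0" by (cases \<theta>) auto
        show ?thesis
        proof (cases "Suc n < t0")
          case True hence "msg_chain r (j, Suc n) \<theta>" using th msg_chain.local by simp
          thus ?thesis using nc by simp
        next
          case False hence "\<theta> = (j, Suc n)" using th by simp
          thus ?thesis using ch1 by simp
        qed
      next
        assume "\<exists>l q t' kk. snd (j, n) \<le> l \<and> sends_in_round r (fst (j, n)) q l kk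
          \<and> kk < length (recvd_msgs (r t') q (fst (j, n))) \<and> ((q,t') = \<theta> \<or> msg_chain r (q,t') \<theta>)"
        then obtain l q t' kk where l: "n \<le> l" "sends_in_round r j q l kk"
          "kk < length (recvd_msgs (r t') q j)" "(q,t') = \<theta> \<or> msg_chain r (q,t') \<theta>" by auto
        have jl: "msg_chain r (j, l) \<theta>"
          using l(4) msg_chain.msg[OF l(2) l(3)] msg_chain.trans[of r "(j,l)" "(q,t')" \<theta>] by auto
        show ?thesis
        proof (cases "l = n")
          case True
          thus ?thesis using l(2) st by (auto simp add: sends_in_round_def)
        next
          case False
          hence "Suc n \<le> l" using l(1) by simp
          hence "msg_chain r (j, Suc n) \<theta>"
            using jl msg_chain.local[of "Suc n" l r j] msg_chain.trans[of r "(j, Suc n)" "(j,l)" \<theta>] by (cases "Suc n = l") auto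
          thus ?thesis using nc by simp
        qed
      qed
    qed
    hence "s < t_min r \<theta> k" by (rule tmin_ge[OF run])
    thus ?thesis using F2 A s(1) by simp
  qed
  thus ?thesis using sl_len_mono[OF run, of "Suc s" F k j] s(3) L_def by simp
qed


theorem theorem6:
  fixes P :: "('v, 'a, 'm, 'x, 'p::finite) protocol"
    and r :: "('v, 'a, 'm, 'x, 'p) run"
    and \<theta> :: "'p \<times> nat"
    and \<Delta> :: nat
  assumes "is_run P r"
    and "\<Delta> > 0"
  shows "\<exists>r'. is_run P r' \<and> loc_equiv r r' \<and>
           (\<forall>j. (\<forall>m \<le> t_min r \<theta> j. r m j = r' m j) \<and>
                (\<forall>m \<ge> t_min r \<theta> j + 1. r m j = r' (m + \<Delta>) j))"
proof -
  note run = assms(1)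
  define T where "T = t_min r \<theta>"
  define f where "f = (\<lambda>j m. if m \<le> T j then m else if m < T j + \<Delta> then T j else m - \<Delta>)"
  define r' where "r' = (\<lambda>m j. r (f j m) j)"
  have fA: "\<And>j m. m - \<Delta> \<le> f j m" "\<And>j m. min m (T j) \<le> f j m" by (auto simp: f_def)
  have fstep: "\<And>j m. f j (Suc m) = f j m \<or> (f j (Suc m) = Suc (f j m) \<and>
      ((m < T j \<and> f j m = m) \<or> (T j + \<Delta> \<le> m \<and> f j m = m - \<Delta>)))"
    using assms(2) by (auto simp: f_def)
  have ok: "ok_step P (r' m) j (r' (Suc m) j)" for m j
  proof -
    consider (eq) "f j (Suc m) = f j m"
      | (sc) "f j (Suc m) = Suc (f j m)" "(m < T j \<and> f j m = m) \<or> (T j + \<Delta> \<le> m \<and> f j m = m - \<Delta>)"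
      using fstep by blast
    thus ?thesis
    proof cases
      case eq thus ?thesis by (simp add: ok_step_def r'_def)
    next
      case sc
      define n where "n = f j m"
      have rj: "r' m j = r n j" "r' (Suc m) j = r (Suc n) j" using sc by (auto simp: r'_def n_def)
      have o: "ok_step P (r n) j (r (Suc n) j)" by (rule run_ok[OF run])
      show ?thesis using o unfolding ok_step_def rj
      proof (elim disjE exE conjE)
        fix k assume it: "in_transit (r n) k j \<noteq> []"
          and st: "r (Suc n) j = add_event (r n j) (ERecv k (hd (in_transit (r n) k j)))"
        have it': "in_transit (r' m) k j = drop (length (rl (r n j) k)) (sl (r (f k m) k) j)"
          using rj(1) by (simp add: in_transit_def r'_def)
        have cs: "(m < t_min r \<theta> j \<and> n = m) \<or> (t_min r \<theta> j + \<Delta> \<le> m \<and> n = m - \<Delta>)"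
          using sc(2) by (simp add: n_def T_def)
        have lt: "length (rl (r n j) k) < length (sl (r (f k m) k) j)"
          using key[OF run it st cs fA(1)[of m k]] fA(2)[of m k] unfolding T_def by blast
        have Ln: "length (rl (r n j) k) < length (sl (r n k) j)" using it by (simp add: in_transit_def)
        have ne: "in_transit (r' m) k j \<noteq> []" using it' lt by simp
        have "hd (in_transit (r' m) k j) = hd (in_transit (r n) k j)"
          using it' hd_same[OF run lt Ln] by (simp add: in_transit_def)
        thus "r (Suc n) j = r n j \<or>
          (\<exists>act\<in>P j (r n j). r (Suc n) j = add_event (r n j) (event_of_action act)) \<or>
          (\<exists>x. r (Suc n) j = add_event (r n j) (EInput x)) \<or>
          (\<exists>k. in_transit (r' m) k j \<noteq> [] \<and> r (Suc n) j = add_event (r n j) (ERecv k (hd (in_transit (r' m) k j))))"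
          using ne st by metis
      qed blast+
    qed
  qed
  have f0: "f j 0 = 0" for j by (simp add: f_def)
  have runr': "is_run P r'"
  proof (rule ok_run)
    show "\<forall>i. hist (r' 0 i) = []" using run f0 by (simp add: r'_def is_run_def)
    show "\<forall>m j. ok_step P (r' m) j (r' (Suc m) j)" using ok by blast
  qed
  have fsurj: "\<exists>m'. f j m' = m" for j m
  proof (cases "m \<le> T j")
    case True thus ?thesis by (intro exI[of _ m]) (simp add: f_def)
  next
    case False thus ?thesis using assms(2) by (intro exI[of _ "m + \<Delta>"]) (simp add: f_def)
  qed
  have le: "loc_equiv r r'"
    unfolding loc_equiv_def r'_def by (metis fsurj)
  have c1: "\<forall>m \<le> t_min r \<theta> j. r m j = r' m j" for j by (simp add: r'_def f_def T_def)
  have c2: "\<forall>m \<ge> t_min r \<theta> j + 1. r m j = r' (m + \<Delta>) j" for j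
    using assms(2) by (simp add: r'_def f_def T_def)
  show ?thesis using runr' le c1 c2 by blast
qed

end
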